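(* Let $\mathcal{E}:\mathbb{R}^N\to\mathbb{R}^F$ and $\mathcal{D}:\mathbb{R}^F\to\mathbb{R}^N$ be maps, let $0<\alpha<1$, $\lambda>0$, $\beta>0$, let $\rho$ be a real number with $0<\rho<2\beta$, and let ${\bm x}\in\mathbb{R}^N$. Assume $\mathcal{T}:\mathbb{R}^F\to\mathbb{R}^F$, $\mathcal{T}(\cdot)=\mathcal{E}(\mathcal{D}(\cdot))-\mathcal{E}({\bm x})$, is continuous. Let sequences $({\bm z}^k)$ and $({\bm y}^k)$ in $\mathbb{R}^F$ satisfy, for $k=0,1,\dots$ (with given starting points ${\bm z}^{-1},{\bm z}^0$), $$ {\bm y}^k={\bm z}^k+\alpha({\bm z}^k-{\bm z}^{k-1}),\qquad {\bm z}^{k+1}={\bm y}^k-2\lambda\beta\,\mathcal{T}{\bm y}^k. $$ Assume ${\bm z}^\star\in\mathbb{R}^F$ satisfies $\mathcal{T}{\bm z}^\star=0$ and $\langle \mathcal{T}{\bm y}^k,{\bm y}^k-{\bm z}^\star\rangle\ge\beta\|\mathcal{T}{\bm y}^k\|^2$ for $k=0,1,\dots$. Set $\nu=\lambda^{-1}-1$, $\delta^k=\nu(1-\alpha)\|{\bm z}^k-{\bm z}^{k-1}\|^2$ and $\Delta^k({\bm z}^\star)=\|{\bm z}^k-{\bm z}^\star\|^2-\|{\bm z}^{k-1}-{\bm z}^\star\|^2$. Then for $k=1,2,\dots$, $$\Delta^{k+1}({\bm z}^\star)+\delta^{k+1}+\nu\alpha\|{\bm z}^{k+1}-2{\bm z}^k+{\bm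 z}^{k-1}\|^2\ \le\ \alpha\,\Delta^k({\bm z}^\star)+\big[\alpha(1+\alpha)+\nu\alpha(1-\alpha)\big]\|{\bm z}^k-{\bm z}^{k-1}\|^2.$$
   Context: $\langle\cdot,\cdot\rangle$ and $\|\cdot\|$ denote the Euclidean inner product and norm on $\mathbb{R}^F$. The maps $\mathcal{E}$ and $\mathcal{D}$ are arbitrary maps between the indicated spaces. *)

theory Defs
  imports "HOL-Analysis.Analysis"
begin

end

theory Submission
  imports Defs
begin

lemma keyid:
  fixes a b c :: "'a::real_inner" and \<alpha> \<nu> :: real
  shows "(norm c)\<^sup>2 - (norm a)\<^sup>2 + \<nu> * (1 - \<alpha>) * (norm (c - a))\<^sup>2
     + \<nu> * \<alpha> * (norm (c - 2 *\<^sub>R a + b))\<^sup>2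
     - (\<alpha> * ((norm a)\<^sup>2 - (norm b)\<^sup>2) + (\<alpha> * (1 + \<alpha>) + \<nu> * \<alpha> * (1 - \<alpha>)) * (norm (a - b))\<^sup>2)
   = (norm c)\<^sup>2 + \<nu> * (norm (c - ((1 + \<alpha>) *\<^sub>R a - \<alpha> *\<^sub>R b)))\<^sup>2
     - (norm ((1 + \<alpha>) *\<^sub>R a - \<alpha> *\<^sub>R b))\<^sup>2"
  unfolding power2_norm_eq_inner
  by (simp add: inner_simps inner_commute algebra_simps)

lemma keyineq:
  fixes w T :: "'a::real_inner" and lam \<beta> :: real
  assumes "lam > 0" "\<beta> > 0" "inner T w \<ge> \<beta> * (norm T)\<^sup>2"
  shows "(norm (w - (2*lam*\<beta>) *\<^sub>R T))\<^sup>2 + (1/lam - 1) * (norm (w - (2*lam*\<beta>) *\<^sub>R T - w))\<^sup>2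
          \<le> (norm w)\<^sup>2"
proof -
  have e1: "(norm (w - (2*lam*\<beta>) *\<^sub>R T))\<^sup>2 = (norm w)\<^sup>2 - 4*lam*\<beta> * inner T w + 4*lam\<^sup>2*\<beta>\<^sup>2*(norm T)\<^sup>2"
    unfolding power2_norm_eq_inner by (simp add: inner_simps inner_commute algebra_simps power2_eq_square)
  have e2: "(1/lam - 1) * (norm (w - (2*lam*\<beta>) *\<^sub>R T - w))\<^sup>2 = 4*lam*\<beta>\<^sup>2*(norm T)\<^sup>2 - 4*lam\<^sup>2*\<beta>\<^sup>2*(norm T)\<^sup>2"
    using assms(1,2) by (simp add: power_mult_distrib field_simps power2_eq_square)
  have "4*lam*\<beta> * (\<beta> * (norm T)\<^sup>2) \<le> 4*lam*\<beta> * inner T w"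
    using assms by (intro mult_left_mono) auto
  then show ?thesis using e1 e2 by (simp add: algebra_simps power2_eq_square)
qed

theorem lemmaS1:
  fixes E :: "real^'n \<Rightarrow> real^'f" and D :: "real^'f \<Rightarrow> real^'n"
    and \<alpha> lam \<beta> \<rho> :: real and x :: "real^'n"
    and z y :: "int \<Rightarrow> real^'f" and zs :: "real^'f" and k :: int
  assumes "0 < \<alpha>" "\<alpha> < 1" "lam > 0" "\<beta> > 0" "0 < \<rho>" "\<rho> < 2 * \<beta>"
    and cont: "continuous_on UNIV (\<lambda>v. E (D v) - E x)"
    and yk: "\<And>j. j \<ge> 0 \<Longrightarrow> y j = z j + \<alpha> *\<^sub>R (z j - z (j - 1))"
    and zk: "\<And>j. j \<ge> 0 \<Longrightarrow> z (j + 1) = y j - (2 * lam * \<beta>) *\<^sub>R (E (D (y j)) - E x)"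
    and zfix: "E (D zs) - E x = 0"
    and coco: "\<And>j. j \<ge> 0 \<Longrightarrow>
        inner (E (D (y j)) - E x) (y j - zs) \<ge> \<beta> * (norm (E (D (y j)) - E x))\<^sup>2"
    and k: "k \<ge> 1"
  shows "((norm (z (k + 1) - zs))\<^sup>2 - (norm (z k - zs))\<^sup>2)
           + (1 / lam - 1) * (1 - \<alpha>) * (norm (z (k + 1) - z k))\<^sup>2
           + (1 / lam - 1) * \<alpha> * (norm (z (k + 1) - 2 *\<^sub>R z k + z (k - 1)))\<^sup>2
         \<le> \<alpha> * ((norm (z k - zs))\<^sup>2 - (norm (z (k - 1) - zs))\<^sup>2)
           + (\<alpha> * (1 + \<alpha>) + (1 / lam - 1) * \<alpha> * (1 - \<alpha>)) * (norm (z k - z (k - 1)))\<^sup>2"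
proof -
  define T where "T = E (D (y k)) - E x"
  define a where "a = z k - zs"
  define b where "b = z (k - 1) - zs"
  define c where "c = z (k + 1) - zs"
  define w where "w = y k - zs"
  have k0: "k \<ge> 0" using k by simp
  have w: "w = (1 + \<alpha>) *\<^sub>R a - \<alpha> *\<^sub>R b"
    unfolding w_def a_def b_def yk[OF k0] by (simp add: algebra_simps)
  have c: "c = w - (2*lam*\<beta>) *\<^sub>R T"
    unfolding c_def w_def T_def zk[OF k0] by simp
  have H: "(norm c)\<^sup>2 + (1/lam - 1) * (norm (c - w))\<^sup>2 \<le> (norm w)\<^sup>2"
  proof -
    have "inner T w \<ge> \<beta> * (norm T)\<^sup>2" using coco[OF k0] unfolding T_def w_def .
    from keyineq[OF assms(3,4) this] show ?thesis unfolding c by simp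
  qed
  have r1: "z (k + 1) - z k = c - a" "z (k + 1) - 2 *\<^sub>R z k + z (k - 1) = c - 2 *\<^sub>R a + b"
     "z k - z (k - 1) = a - b"
    unfolding a_def b_def c_def by (simp_all add: algebra_simps scaleR_2)
  show ?thesis
    unfolding r1 a_def[symmetric] b_def[symmetric] c_def[symmetric]
    using keyid[of c a "1/lam - 1" \<alpha> b] H unfolding w by linarith
qed

end
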